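(* Let $E=[n]$, let $f:2^E\to\mathbb{Z}_{\ge0}$ be an integer-valued submodular function with $M:=\|f\|_\infty<\infty$, and let $d\in\mathbb{Z}^n$ be nonzero. Let $\hat E=E\cup\{n+1\}$ and, for $C\in\mathbb{R}$, define $\hat f(\cdot;C):2^{\hat E}\to\mathbb{R}$ by \[ \hat f(S;C)=\begin{cases} f(S) & \text{if } n+1\notin S,\\ f(S\setminus\{n+1\})+C & \text{if } n+1\in S\subsetneq \hat E,\\ f(E) & \text{if } S=\hat E,\end{cases} \] and let $\hat F(\cdot;C)$ be the Lovász extension of $\hat f(\cdot;C)$. For $x\in\mathbb{R}^{n+1}$ let $x_{[n]}=(x_1,\dots,x_n)$ and define $h_R(x)=R|1-d^\top x_{[n]}|+R|x_{n+1}|$ and $\Phi(x)=\hat F(x;C)+h_R(x)$. Suppose $C>M\|d\|_1$ and $R>C+M$. Then every minimizer $x^\star$ of $\Phi$ over $\mathbb{R}^{n+1}$ satisfies $d^\top x^\star_{[n]}=1$ and $x^\star_{n+1}=0$, and consequently \[ \min_{x\in\mathbb{R}^{n+1}}\hat F(x;C)+h_R(x)=\min\bigl\{\hat F(x;C):\ x\in\mathbb{R}^{n+1},\ d^\top x_{[n]}=1,\ x_{n+1}=0\bigr\}. \]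
   Context: For a set function $g$ on a finite ground set $V=\{1,\dots,m\}$ and $x\in\mathbb{R}^V$, $x(S)=\sum_{i\in S}x_i$, and the base polytope is $B(g)=\{x: x(S)\le g(S)\ \forall S\subseteq V,\ x(V)=g(V)\}$. The Lovász extension is $G(x)=\max_{v\in B(g)}v^\top x$; equivalently $G(x)=\sum_{i=1}^m x_{\pi_i}(g(S_i)-g(S_{i-1}))$ where $x_{\pi_1}\ge\cdots\ge x_{\pi_m}$ (ties broken lexicographically), $S_i=\{\pi_1,\dots,\pi_i\}$, $S_0=\emptyset$. $\|d\|_1=\sum_i|d_i|$. *)

theory Defs
  imports "HOL-Analysis.Analysis"
begin

text \<open>Ground set V = {1..m}; vectors are functions nat => real (only the
  coordinates 1..m matter).\<close>

definition precedes :: "(nat \<Rightarrow> real) \<Rightarrow> nat \<Rightarrow> nat \<Rightarrow> bool" where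
  "precedes x i j \<longleftrightarrow> x i > x j \<or> (x i = x j \<and> i < j)"

definition sort_perm :: "nat \<Rightarrow> (nat \<Rightarrow> real) \<Rightarrow> nat \<Rightarrow> nat" where
  "sort_perm m x k = (THE j. j \<in> {1..m} \<and> card {i \<in> {1..m}. precedes x i j} = k - 1)"

definition prefix_set :: "nat \<Rightarrow> (nat \<Rightarrow> real) \<Rightarrow> nat \<Rightarrow> nat set" where
  "prefix_set m x i = sort_perm m x ` {1..i}"

definition lovasz_ext :: "nat \<Rightarrow> (nat set \<Rightarrow> real) \<Rightarrow> (nat \<Rightarrow> real) \<Rightarrow> real" where
  "lovasz_ext m g x = (\<Sum>i=1..m. x (sort_perm m x i) *
      (g (prefix_set m x i) - g (prefix_set m x (i - 1))))"

definition submodular_on :: "nat set \<Rightarrow> (nat set \<Rightarrow> int) \<Rightarrow> bool" where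
  "submodular_on E f \<longleftrightarrow> (\<forall>A B. A \<subseteq> E \<longrightarrow> B \<subseteq> E \<longrightarrow> f (A \<union> B) + f (A \<inter> B) \<le> f A + f B)"

definition fhat :: "nat \<Rightarrow> (nat set \<Rightarrow> int) \<Rightarrow> real \<Rightarrow> nat set \<Rightarrow> real" where
  "fhat n f C S = (if Suc n \<notin> S then real_of_int (f S)
                   else if S = {1..Suc n} then real_of_int (f {1..n})
                   else real_of_int (f (S - {Suc n})) + C)"

definition hR :: "nat \<Rightarrow> (nat \<Rightarrow> int) \<Rightarrow> real \<Rightarrow> (nat \<Rightarrow> real) \<Rightarrow> real" where
  "hR n d R x = R * \<bar>1 - (\<Sum>i=1..n. real_of_int (d i) * x i)\<bar> + R * \<bar>x (Suc n)\<bar>"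

end

theory Submission
  imports Defs
begin



lemma prec_total: "i \<noteq> j \<Longrightarrow> precedes x i j \<or> precedes x j i"
  by (auto simp: precedes_def)
lemma prec_trans: "precedes x i j \<Longrightarrow> precedes x j k \<Longrightarrow> precedes x i k"
  by (auto simp: precedes_def)
lemma prec_irrefl: "\<not> precedes x i i"
  by (auto simp: precedes_def)

definition rk :: "nat \<Rightarrow> (nat \<Rightarrow> real) \<Rightarrow> nat \<Rightarrow> nat" where
  "rk m x j = card {i \<in> {1..m}. precedes x i j}"

lemma rk_less: assumes "j \<in> {1..m}" shows "rk m x j < m"
proof -
  have "{i \<in> {1..m}. precedes x i j} \<subseteq> {1..m} - {j}" using prec_irrefl by auto
  hence "rk m x j \<le> card ({1..m} - {j})" unfolding rk_def by (intro card_mono) auto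
  also have "\<dots> < m" using assms by auto
  finally show ?thesis .
qed

lemma rk_mono: assumes "i \<in> {1..m}" "j \<in> {1..m}" "precedes x i j" shows "rk m x i < rk m x j"
  unfolding rk_def
proof (rule psubset_card_mono)
  show "{p \<in> {1..m}. precedes x p i} \<subset> {p \<in> {1..m}. precedes x p j}"
    using assms prec_trans[of x _ i j] prec_irrefl[of x i] by blast
qed auto

lemma rk_inj: "inj_on (rk m x) {1..m}"
proof (rule inj_onI)
  fix i j assume "i \<in> {1..m}" "j \<in> {1..m}" "rk m x i = rk m x j"
  then show "i = j" using prec_total[of i j x] rk_mono[of i m j x] rk_mono[of j m i x] by force
qed

lemma rk_image: "rk m x ` {1..m} = {..<m}"
proof (rule card_subset_eq)
  show "rk m x ` {1..m} \<subseteq> {..<m}" using rk_less by auto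
  show "card (rk m x ` {1..m}) = card {..<m}" using card_image[OF rk_inj] by simp
qed auto

lemma sort_perm_rk_def: "sort_perm m x k = (THE j. j \<in> {1..m} \<and> rk m x j = k - 1)"
  by (simp add: sort_perm_def rk_def)

lemma sort_perm_props: assumes "k \<in> {1..m}"
  shows "sort_perm m x k \<in> {1..m} \<and> rk m x (sort_perm m x k) = k - 1"
proof -
  have "k - 1 \<in> rk m x ` {1..m}" using assms rk_image[of m x] by auto
  then obtain j where j: "j \<in> {1..m}" "rk m x j = k - 1" by auto
  have "\<exists>!j. j \<in> {1..m} \<and> rk m x j = k - 1"
    using j rk_inj[of m x] unfolding inj_on_def by metis
  from theI'[OF this] show ?thesis unfolding sort_perm_rk_def .
qed

lemma sort_perm_rk: assumes "j \<in> {1..m}" shows "sort_perm m x (rk m x j + 1) = j"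
proof -
  have "rk m x j + 1 \<in> {1..m}" using rk_less[where x=x, OF assms] by auto
  from sort_perm_props[OF this] have "sort_perm m x (rk m x j + 1) \<in> {1..m}"
     "rk m x (sort_perm m x (rk m x j + 1)) = rk m x j" by auto
  then show ?thesis using assms rk_inj[of m x] by (auto dest: inj_onD)
qed

lemma prefix_eq: assumes "k \<le> m" shows "prefix_set m x k = {j \<in> {1..m}. rk m x j < k}"
proof
  show "prefix_set m x k \<subseteq> {j \<in> {1..m}. rk m x j < k}"
    unfolding prefix_set_def using sort_perm_props[of _ m x] assms by fastforce
  show "{j \<in> {1..m}. rk m x j < k} \<subseteq> prefix_set m x k"
  proof
    fix j assume "j \<in> {j \<in> {1..m}. rk m x j < k}"
    then have "j \<in> {1..m}" "rk m x j + 1 \<in> {1..k}" by auto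
    then show "j \<in> prefix_set m x k" unfolding prefix_set_def
      using sort_perm_rk by (metis image_eqI)
  qed
qed

lemma sorted_mono: assumes "1 \<le> k" "k \<le> l" "l \<le> m"
  shows "x (sort_perm m x l) \<le> x (sort_perm m x k)"
proof (cases "k = l")
  case False
  have k: "sort_perm m x k \<in> {1..m}" "rk m x (sort_perm m x k) = k - 1"
    using sort_perm_props[of k m x] assms by auto
  have l: "sort_perm m x l \<in> {1..m}" "rk m x (sort_perm m x l) = l - 1"
    using sort_perm_props[of l m x] assms by auto
  show ?thesis
  proof (rule ccontr)
    assume "\<not> ?thesis"
    then have "precedes x (sort_perm m x l) (sort_perm m x k)" by (auto simp: precedes_def)
    from rk_mono[OF l(1) k(1) this] k l False assms show False by auto
  qed
qed simp

lemma telescope: "(\<Sum>l<Suc m. (p l - p (Suc l)) * s l) =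
   p 0 * s 0 - p (Suc m) * s m + (\<Sum>k=1..m. p k * (s k - s (k - 1)))" for p s :: "nat \<Rightarrow> real"
proof (induction m)
  case (Suc m)
  show ?case using Suc by (simp add: algebra_simps)
qed (simp add: algebra_simps)

lemma dec_mono: assumes "\<And>k. k \<le> m \<Longrightarrow> p (Suc k) \<le> (p k :: real)"
  shows "l \<le> k \<Longrightarrow> k \<le> Suc m \<Longrightarrow> p k \<le> p l"
proof (induction k)
  case (Suc k)
  then show ?case using assms[of k] by (cases "l = Suc k") auto
qed simp



lemma layer_cake:
  fixes g :: "nat set \<Rightarrow> real" and a b :: real
  assumes ab: "\<And>j. j \<in> {1..m} \<Longrightarrow> a \<le> x j \<and> x j \<le> b" and "a \<le> b"
  shows "((\<lambda>\<tau>. g {j\<in>{1..m}. \<tau> \<le> x j}) has_integral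
           (lovasz_ext m g x - a * g {1..m} + b * g {})) {a..b}"
proof -
  define p where "p k = (if k = 0 then b else if k \<le> m then x (sort_perm m x k) else a)" for k
  define S where "S k = {j\<in>{1..m}. rk m x j < k}" for k
  have pdec: "p (Suc k) \<le> p k" if km: "k \<le> m" for k
  proof -
    consider "k = 0" | "k \<ge> 1" "Suc k \<le> m" | "Suc k = Suc m" "k \<ge> 1" using km by (cases "k = 0"; cases "Suc k \<le> m"; auto)
    then show ?thesis
    proof cases
      case 1 then show ?thesis using ab[of "sort_perm m x 1"] sort_perm_props[of 1 m x] \<open>a \<le> b\<close>
        by (auto simp: p_def)
    next
      case 2 then show ?thesis using sorted_mono[of k "Suc k" m x] by (auto simp: p_def)
    next
      case 3 then show ?thesis using ab[of "sort_perm m x k"] sort_perm_props[of k m x]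
        by (auto simp: p_def)
    qed
  qed
  have pmono: "p k \<le> p l" if "l \<le> k" "k \<le> Suc m" for k l
    using dec_mono[of m p, OF pdec] that by blast
  have p0: "p 0 = b" by (simp add: p_def)
  have pb: "p k \<le> b" if "k \<le> Suc m" for k using pmono[of 0 k, OF _ that] p0 by simp
  have xj: "x j = p (rk m x j + 1)" if "j \<in> {1..m}" for j
    using sort_perm_rk[OF that, of x] rk_less[where x=x, OF that] by (simp add: p_def)
  have level: "{j\<in>{1..m}. \<tau> \<le> x j} = S k" if "k \<le> m" "p (Suc k) < \<tau>" "\<tau> < p k" for k \<tau>
  proof (intro set_eqI iffI)
    fix j assume j: "j \<in> {j\<in>{1..m}. \<tau> \<le> x j}"
    then have "j \<in> {1..m}" by auto
    note r = rk_less[where x=x, OF this] xj[OF this]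
    show "j \<in> S k"
    proof (rule ccontr)
      assume "j \<notin> S k"
      then have "rk m x j \<ge> k" using j by (auto simp: S_def)
      then have "p (rk m x j + 1) \<le> p (Suc k)" using pmono[of "Suc k" "rk m x j + 1"] r by auto
      then show False using j r that by auto
    qed
  next
    fix j assume j: "j \<in> S k"
    then have jm: "j \<in> {1..m}" "rk m x j < k" by (auto simp: S_def)
    note r = rk_less[where x=x, OF jm(1)] xj[OF jm(1)]
    have "p k \<le> p (rk m x j + 1)" using pmono[of "rk m x j + 1" k] jm that by auto
    then show "j \<in> {j\<in>{1..m}. \<tau> \<le> x j}" using jm r that by auto
  qed
  have piece: "((\<lambda>\<tau>. g {j\<in>{1..m}. \<tau> \<le> x j}) has_integral ((p k - p (Suc k)) * g (S k)))
      {p (Suc k)..p k}" if "k \<le> m" for k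
  proof (rule has_integral_spike_finite[of "{p (Suc k), p k}"])
    show "((\<lambda>\<tau>. g (S k)) has_integral ((p k - p (Suc k)) * g (S k))) {p (Suc k)..p k}"
      using has_integral_const_real[of "g (S k)" "p (Suc k)" "p k"] pdec[OF that] by simp
    show "\<And>\<tau>. \<tau> \<in> {p (Suc k)..p k} - {p (Suc k), p k} \<Longrightarrow> g {j\<in>{1..m}. \<tau> \<le> x j} = g (S k)"
      using level[OF that] by auto
  qed auto
  have accum: "((\<lambda>\<tau>. g {j\<in>{1..m}. \<tau> \<le> x j}) has_integral
        (\<Sum>l<k. (p l - p (Suc l)) * g (S l))) {p k..b}" if "k \<le> Suc m" for k
    using that
  proof (induction k)
    case 0
    then show ?case using has_integral_refl(1)[of "(\<lambda>\<tau>. g {j\<in>{1..m}. \<tau> \<le> x j})" b]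
      by (simp add: p_def)
  next
    case (Suc k)
    have "((\<lambda>\<tau>. g {j\<in>{1..m}. \<tau> \<le> x j}) has_integral
        ((p k - p (Suc k)) * g (S k) + (\<Sum>l<k. (p l - p (Suc l)) * g (S l)))) {p (Suc k)..b}"
      by (rule has_integral_combine[OF pdec _ piece Suc.IH]) (use Suc.prems pb in auto)
    then show ?case by (simp add: add.commute)
  qed
  have S0: "S 0 = {}" by (simp add: S_def)
  have Sm: "S m = {1..m}" using rk_less by (auto simp: S_def)
  have G: "lovasz_ext m g x = (\<Sum>k=1..m. p k * (g (S k) - g (S (k - 1))))"
    unfolding lovasz_ext_def
    by (rule sum.cong) (auto simp: p_def S_def prefix_eq)
  have "(\<Sum>l<Suc m. (p l - p (Suc l)) * g (S l)) = lovasz_ext m g x - a * g {1..m} + b * g {}"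
    unfolding telescope[of p "\<lambda>k. g (S k)"] G using S0 Sm by (simp add: p_def)
  with accum[of "Suc m"] show ?thesis by (simp add: p_def)
qed



lemma lovasz_coord:
  fixes g :: "nat set \<Rightarrow> real"
  assumes i: "i \<in> {1..m}" and K: "0 \<le> K"
    and gK: "\<And>A. A \<subseteq> {1..m} - {i} \<Longrightarrow> \<bar>g (insert i A) - g A\<bar> \<le> K"
  shows "lovasz_ext m g (x(i := y)) - lovasz_ext m g x \<le> K * \<bar>y - x i\<bar>"
proof -
  define T where "T = insert y (x ` {1..m})"
  have fT: "finite T" "T \<noteq> {}" by (auto simp: T_def)
  define a where "a = Min T"
  define b where "b = Max T"
  have abT: "a \<le> t \<and> t \<le> b" if "t \<in> T" for t using fT that by (auto simp: a_def b_def)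
  have ab: "a \<le> b" using abT[of y] by (auto simp: T_def)
  have hx: "\<And>j. j \<in> {1..m} \<Longrightarrow> a \<le> x j \<and> x j \<le> b" using abT by (auto simp: T_def)
  have hx': "\<And>j. j \<in> {1..m} \<Longrightarrow> a \<le> (x(i:=y)) j \<and> (x(i:=y)) j \<le> b"
    using abT by (auto simp: T_def)
  define lo where "lo = min (x i) y"
  define hi where "hi = max (x i) y"
  have lohi: "a \<le> lo" "lo \<le> hi" "hi \<le> b" using hx[OF i] abT[of y]
    by (auto simp: lo_def hi_def T_def)
  note I1 = layer_cake[where g=g and m=m and x=x and a=a and b=b, OF hx ab]
  note I2 = layer_cake[where g=g and m=m and x="x(i:=y)" and a=a and b=b, OF hx' ab]
  have D: "((\<lambda>\<tau>. g {j\<in>{1..m}. \<tau> \<le> (x(i:=y)) j} - g {j\<in>{1..m}. \<tau> \<le> x j}) has_integral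
     (lovasz_ext m g (x(i := y)) - lovasz_ext m g x)) {a..b}"
    using has_integral_diff[OF I2 I1] by (simp add: algebra_simps)
  have H0: "((\<lambda>\<tau>. K) has_integral (K * (hi - lo))) {lo..hi}"
    using has_integral_const_real[of K lo hi] lohi by (simp add: mult.commute)
  have H: "((\<lambda>\<tau>. if \<tau> \<in> {lo..hi} then K else 0) has_integral (K * (hi - lo))) {a..b}"
    using has_integral_restrict_closed_subintervals_eq[of lo hi a b "\<lambda>_. K"] H0 lohi by simp
  have le: "g {j\<in>{1..m}. \<tau> \<le> (x(i:=y)) j} - g {j\<in>{1..m}. \<tau> \<le> x j}
      \<le> (if \<tau> \<in> {lo..hi} then K else 0)" for \<tau>
  proof -
    define A where "A = {j\<in>{1..m} - {i}. \<tau> \<le> x j}"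
    have A: "A \<subseteq> {1..m} - {i}" by (auto simp: A_def)
    have e1: "{j\<in>{1..m}. \<tau> \<le> x j} = (if \<tau> \<le> x i then insert i A else A)"
      using i by (auto simp: A_def)
    have e2: "{j\<in>{1..m}. \<tau> \<le> (x(i:=y)) j} = (if \<tau> \<le> y then insert i A else A)"
      using i by (auto simp: A_def)
    show ?thesis using gK[OF A] K unfolding e1 e2
      by (auto simp: lo_def hi_def abs_le_iff)
  qed
  have "lovasz_ext m g (x(i := y)) - lovasz_ext m g x \<le> K * (hi - lo)"
    by (rule has_integral_le[OF D H le])
  also have "hi - lo = \<bar>y - x i\<bar>" by (auto simp: lo_def hi_def)
  finally show ?thesis .
qed



theorem lemma5:
  fixes n :: nat and f :: "nat set \<Rightarrow> int" and d :: "nat \<Rightarrow> int" and C R :: real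
  assumes f_nonneg: "\<forall>S. S \<subseteq> {1..n} \<longrightarrow> f S \<ge> 0"
    and f_submod: "submodular_on {1..n} f"
    and d_nonzero: "\<exists>i\<in>{1..n}. d i \<noteq> 0"
    and hC: "C > real_of_int (Max (f ` Pow {1..n})) * (\<Sum>i=1..n. real_of_int \<bar>d i\<bar>)"
    and hR: "R > C + real_of_int (Max (f ` Pow {1..n}))"
  shows "(\<forall>xs :: nat \<Rightarrow> real.
            (\<forall>y :: nat \<Rightarrow> real. lovasz_ext (Suc n) (fhat n f C) xs + hR n d R xs
                               \<le> lovasz_ext (Suc n) (fhat n f C) y + hR n d R y)
            \<longrightarrow> (\<Sum>i=1..n. real_of_int (d i) * xs i) = 1 \<and> xs (Suc n) = 0)
       \<and> (INF x :: nat \<Rightarrow> real. ereal (lovasz_ext (Suc n) (fhat n f C) x + hR n d R x))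
         = (INF x \<in> {x :: nat \<Rightarrow> real. (\<Sum>i=1..n. real_of_int (d i) * x i) = 1 \<and> x (Suc n) = 0}.
              ereal (lovasz_ext (Suc n) (fhat n f C) x))"
proof -
  define M where "M = real_of_int (Max (f ` Pow {1..n}))"
  define G where "G = lovasz_ext (Suc n) (fhat n f C)"
  define s where "s x = (\<Sum>i=1..n. real_of_int (d i) * x i)" for x :: "nat \<Rightarrow> real"
  define \<Phi> where "\<Phi> x = G x + hR n d R x" for x
  have fS: "0 \<le> real_of_int (f S) \<and> real_of_int (f S) \<le> M" if "S \<subseteq> {1..n}" for S
  proof -
    have "f S \<le> Max (f ` Pow {1..n})" using that by (intro Max_ge) auto
    then show ?thesis using f_nonneg that by (auto simp: M_def)
  qed
  have M0: "0 \<le> M" using fS[of "{}"] by simp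
  have "0 \<le> M * (\<Sum>i=1..n. real_of_int \<bar>d i\<bar>)" using M0 by (intro mult_nonneg_nonneg sum_nonneg) auto
  then have C0: "0 \<le> C" using hC by (simp add: M_def)
  have RCM: "C + M < R" using hR by (simp add: M_def)
  have bnd_last: "\<bar>fhat n f C (insert (Suc n) A) - fhat n f C A\<bar> \<le> C"
    if "A \<subseteq> {1..Suc n} - {Suc n}" for A
  proof -
    have A: "A \<subseteq> {1..n}" "Suc n \<notin> A" using that by auto
    have e: "insert (Suc n) A - {Suc n} = A" using A by auto
    show ?thesis
    proof (cases "insert (Suc n) A = {1..Suc n}")
      case True
      have "A = insert (Suc n) A - {Suc n}" using A by auto
      also have "\<dots> = {1..n}" unfolding True by auto
      finally have "A = {1..n}" .
      then show ?thesis using C0 A True by (simp add: fhat_def)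
    next
      case False
      then show ?thesis using C0 A e by (simp add: fhat_def)
    qed
  qed
  have bnd: "\<bar>fhat n f C (insert i A) - fhat n f C A\<bar> \<le> C + M"
    if i: "i \<in> {1..n}" and "A \<subseteq> {1..Suc n} - {i}" for i A
  proof -
    have iA: "i \<notin> A" "A \<noteq> {1..Suc n}" "A - {Suc n} \<subseteq> {1..n}" "insert i A - {Suc n} \<subseteq> {1..n}"
      using that by auto
    note f1 = fS[OF iA(3)] and f2 = fS[OF iA(4)]
    show ?thesis
    proof (cases "Suc n \<in> A")
      case True
      have eA: "fhat n f C A = real_of_int (f (A - {Suc n})) + C"
        using True iA(2) unfolding fhat_def by simp
      show ?thesis
      proof (cases "insert i A = {1..Suc n}")
        case True
        have "fhat n f C (insert i A) = real_of_int (f {1..n})"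
          using True unfolding fhat_def by simp
        then show ?thesis using eA f1 fS[of "{1..n}"] C0 by (simp add: abs_le_iff)
      next
        case False
        have "fhat n f C (insert i A) = real_of_int (f (insert i A - {Suc n})) + C"
          using False \<open>Suc n \<in> A\<close> unfolding fhat_def by simp
        then show ?thesis using eA f1 f2 C0 by (simp add: abs_le_iff)
      qed
    next
      case False
      have A1: "A \<subseteq> {1..n}"
      proof
        fix z assume "z \<in> A"
        with that(2) False have "z \<in> {1..Suc n}" "z \<noteq> Suc n" by auto
        then show "z \<in> {1..n}" by auto
      qed
      have A2: "insert i A \<subseteq> {1..n}" using A1 i by auto
      have "Suc n \<notin> insert i A" using False i by auto
      then have "fhat n f C (insert i A) = real_of_int (f (insert i A))"
        unfolding fhat_def by simp
      moreover have "fhat n f C A = real_of_int (f A)" using False unfolding fhat_def by simp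
      ultimately show ?thesis using fS[OF A1] fS[OF A2] C0 by (simp add: abs_le_iff)
    qed
  qed
  obtain i0 where i0: "i0 \<in> {1..n}" "d i0 \<noteq> 0" using d_nonzero by blast
  have di0: "1 \<le> \<bar>real_of_int (d i0)\<bar>" using i0 by linarith
  have key: "\<exists>x2. s x2 = 1 \<and> x2 (Suc n) = 0 \<and>
      G x2 + (R - C) * \<bar>x (Suc n)\<bar> + (R - C - M) * \<bar>1 - s x\<bar> \<le> \<Phi> x" for x
  proof -
    define x1 where "x1 = x(Suc n := 0)"
    have G1: "G x1 - G x \<le> C * \<bar>0 - x (Suc n)\<bar>"
      unfolding G_def x1_def by (rule lovasz_coord) (use C0 bnd_last in auto)
    have s1: "s x1 = s x" unfolding s_def x1_def by (rule sum.cong) auto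
    define \<delta> where "\<delta> = (1 - s x) / real_of_int (d i0)"
    define x2 where "x2 = x1(i0 := x1 i0 + \<delta>)"
    have G2: "G x2 - G x1 \<le> (C + M) * \<bar>(x1 i0 + \<delta>) - x1 i0\<bar>"
      unfolding G_def x2_def by (rule lovasz_coord) (use C0 M0 bnd i0 in auto)
    have "\<bar>\<delta>\<bar> = \<bar>1 - s x\<bar> / \<bar>real_of_int (d i0)\<bar>" by (simp add: \<delta>_def abs_divide)
    also have "\<dots> \<le> \<bar>1 - s x\<bar> / 1" by (rule divide_left_mono) (use di0 in auto)
    finally have "\<bar>\<delta>\<bar> \<le> \<bar>1 - s x\<bar>" by simp
    then have G2': "G x2 - G x1 \<le> (C + M) * \<bar>1 - s x\<bar>"
      using G2 C0 M0 mult_left_mono[of "\<bar>\<delta>\<bar>" "\<bar>1 - s x\<bar>" "C + M"] by simp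
    have "s x2 = (\<Sum>i=1..n. real_of_int (d i) * x1 i + (if i = i0 then real_of_int (d i) * \<delta> else 0))"
      unfolding s_def x2_def by (rule sum.cong) (auto simp: algebra_simps)
    also have "\<dots> = s x1 + real_of_int (d i0) * \<delta>"
      using i0 by (simp add: sum.distrib s_def)
    also have "\<dots> = 1" using i0 s1 by (simp add: \<delta>_def)
    finally have s2: "s x2 = 1" .
    have x2n: "x2 (Suc n) = 0" using i0 by (auto simp: x2_def x1_def)
    have "\<Phi> x = G x + R * \<bar>1 - s x\<bar> + R * \<bar>x (Suc n)\<bar>"
      by (simp add: \<Phi>_def hR_def s_def)
    then show ?thesis using s2 x2n G1 G2' by (intro exI[of _ x2]) (auto simp: algebra_simps)
  qed
  have feas: "\<Phi> x = G x" if "s x = 1" "x (Suc n) = 0" for x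
    using that by (simp add: \<Phi>_def hR_def s_def)
  have part1: "s xs = 1 \<and> xs (Suc n) = 0" if min: "\<forall>y. \<Phi> xs \<le> \<Phi> y" for xs
  proof -
    obtain x2 where x2: "s x2 = 1" "x2 (Suc n) = 0"
      "G x2 + (R - C) * \<bar>xs (Suc n)\<bar> + (R - C - M) * \<bar>1 - s xs\<bar> \<le> \<Phi> xs"
      using key by blast
    have "\<Phi> xs \<le> G x2" using min feas[OF x2(1,2)] by metis
    then have "(R - C) * \<bar>xs (Suc n)\<bar> + (R - C - M) * \<bar>1 - s xs\<bar> \<le> 0" using x2 by linarith
    moreover have "0 \<le> (R - C) * \<bar>xs (Suc n)\<bar>" "0 \<le> (R - C - M) * \<bar>1 - s xs\<bar>"
      using RCM M0 by auto
    ultimately have "(R - C) * \<bar>xs (Suc n)\<bar> = 0" "(R - C - M) * \<bar>1 - s xs\<bar> = 0" by linarith+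
    then show ?thesis using RCM M0 by auto
  qed
  have part2: "(INF x. ereal (\<Phi> x)) = (INF x \<in> {x. s x = 1 \<and> x (Suc n) = 0}. ereal (G x))"
  proof (rule antisym)
    show "(INF x. ereal (\<Phi> x)) \<le> (INF x \<in> {x. s x = 1 \<and> x (Suc n) = 0}. ereal (G x))"
    proof (rule INF_greatest)
      fix x assume "x \<in> {x. s x = 1 \<and> x (Suc n) = 0}"
      then have "ereal (\<Phi> x) = ereal (G x)" using feas by auto
      then show "(INF x. ereal (\<Phi> x)) \<le> ereal (G x)" by (metis INF_lower UNIV_I)
    qed
    show "(INF x \<in> {x. s x = 1 \<and> x (Suc n) = 0}. ereal (G x)) \<le> (INF x. ereal (\<Phi> x))"
    proof (rule INF_greatest)
      fix x :: "nat \<Rightarrow> real"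
      obtain x2 where x2: "s x2 = 1" "x2 (Suc n) = 0"
        "G x2 + (R - C) * \<bar>x (Suc n)\<bar> + (R - C - M) * \<bar>1 - s x\<bar> \<le> \<Phi> x"
        using key by blast
      have "0 \<le> (R - C) * \<bar>x (Suc n)\<bar>" "0 \<le> (R - C - M) * \<bar>1 - s x\<bar>"
        using RCM M0 by auto
      then have "G x2 \<le> \<Phi> x" using x2 by linarith
      then have "ereal (G x2) \<le> ereal (\<Phi> x)" by simp
      moreover have "(INF x \<in> {x. s x = 1 \<and> x (Suc n) = 0}. ereal (G x)) \<le> ereal (G x2)"
        using x2 by (intro INF_lower) auto
      ultimately show "(INF x \<in> {x. s x = 1 \<and> x (Suc n) = 0}. ereal (G x)) \<le> ereal (\<Phi> x)"
        by (rule order_trans[rotated])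
    qed
  qed
  show ?thesis using part1 part2 unfolding \<Phi>_def G_def s_def by blast
qed


end
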